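(* For every Cantor set $C\subset\mathbb{R}$ and every $\varepsilon\in(0,1)$, $$(1-\varepsilon)^2\le\frac{\tau_\varepsilon(C)}{\tau(C)}\le 1 .$$ In particular $\lim_{\varepsilon\to0}\tau_\varepsilon(C)=\tau(C)$.
   Context: A Cantor set is a non-empty compact, perfect, totally disconnected subset of $\mathbb{R}$; its gaps are the bounded connected components of its complement. For $\varepsilon\ge0$ and $u$ the right endpoint of a gap $G$ of a Cantor set $K$, the $\varepsilon$-bridge is $B_\varepsilon(u)=(u,\ell(\widetilde G))$, where $\widetilde G$ is the gap of $K$ to the right of $u$ with $|\widetilde G|\ge(1-\varepsilon)|G|$ such that every gap $\widehat G\subset(u,\ell(\widetilde G))$ satisfies $|\widehat G|<(1-\varepsilon)|G|$, and $\ell(\widetilde G)$ is the left endpoint of $\widetilde G$ (if no such gap exists, the bridge extends to $\max K$); $\varepsilon$-bridges at left endpoints of gaps are defined symmetrically. The $\varepsilon$-thickness is $\tau_\varepsilon(K)=\inf_u|B_\varepsilon(u)|/|G|$, the infimum over all gap endpoints $u$, and $\tau(K)=\tau_0(K)$ is the Newhouse thickness. *)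

theory Defs
  imports "HOL-Analysis.Analysis"
begin

definition cantor_set :: "real set \<Rightarrow> bool" where
  "cantor_set K \<longleftrightarrow> K \<noteq> {} \<and> compact K
     \<and> (\<forall>x\<in>K. x islimpt K)
     \<and> (\<forall>x\<in>K. connected_component_set K x = {x})"

definition gaps :: "real set \<Rightarrow> real set set" where
  "gaps K = {G. G \<in> components (- K) \<and> bounded G}"

definition glen :: "real set \<Rightarrow> real" where
  "glen G = Sup G - Inf G"

definition right_bridge_end :: "real \<Rightarrow> real set \<Rightarrow> real set \<Rightarrow> real" where
  "right_bridge_end \<epsilon> K G =
     (let u = Sup G;
          ok = (\<lambda>H. H \<in> gaps K \<and> u \<le> Inf H \<and> glen H \<ge> (1 - \<epsilon>) * glen G
                  \<and> (\<forall>H'\<in>gaps K. H' \<subseteq> {u<..<Inf H} \<longrightarrow> glen H' < (1 - \<epsilon>) * glen G))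
      in if (\<exists>H. ok H) then Inf (THE H. ok H) else Sup K)"

definition left_bridge_end :: "real \<Rightarrow> real set \<Rightarrow> real set \<Rightarrow> real" where
  "left_bridge_end \<epsilon> K G =
     (let v = Inf G;
          ok = (\<lambda>H. H \<in> gaps K \<and> Sup H \<le> v \<and> glen H \<ge> (1 - \<epsilon>) * glen G
                  \<and> (\<forall>H'\<in>gaps K. H' \<subseteq> {Sup H<..<v} \<longrightarrow> glen H' < (1 - \<epsilon>) * glen G))
      in if (\<exists>H. ok H) then Sup (THE H. ok H) else Inf K)"

definition eps_thickness :: "real \<Rightarrow> real set \<Rightarrow> real" where
  "eps_thickness \<epsilon> K =
     Inf ((\<lambda>G. (right_bridge_end \<epsilon> K G - Sup G) / glen G) ` gaps K
        \<union> (\<lambda>G. (Inf G - left_bridge_end \<epsilon> K G) / glen G) ` gaps K)"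

definition thickness :: "real set \<Rightarrow> real" where
  "thickness K = eps_thickness 0 K"

end

theory Submission
  imports Defs
begin


lemma open_interval_real:
  fixes G :: "real set"
  assumes "open G" "connected G" "bounded G" "G \<noteq> {}"
  shows "Inf G < Sup G \<and> G = {Inf G<..<Sup G}"
proof -
  have bb: "bdd_below G" "bdd_above G" using assms(3) bounded_imp_bdd_below bounded_imp_bdd_above by auto
  have sub: "G \<subseteq> {Inf G<..<Sup G}"
  proof
    fix x assume x: "x \<in> G"
    then obtain d where d: "d > 0" "ball x d \<subseteq> G" using assms(1) open_contains_ball by blast
    have "x - d/2 \<in> G" "x + d/2 \<in> G" using d by (auto simp: dist_real_def intro!: subsetD[OF d(2)])
    then have "Inf G \<le> x - d/2" "x + d/2 \<le> Sup G" using bb cInf_lower cSup_upper by auto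
    then show "x \<in> {Inf G<..<Sup G}" using d by auto
  qed
  have sup: "{Inf G<..<Sup G} \<subseteq> G"
  proof
    fix x assume x: "x \<in> {Inf G<..<Sup G}"
    then obtain y where "y \<in> G" "y < x" using cInf_less_iff[OF assms(4) bb(1)] by auto
    moreover obtain z where "z \<in> G" "x < z" using less_cSup_iff[OF assms(4) bb(2)] x by auto
    ultimately show "x \<in> G" using assms(2) unfolding connected_iff_interval
      by (meson less_imp_le)
  qed
  from sub sup assms(4) show ?thesis by auto
qed

lemma gap_interval:
  assumes "closed K" "G \<in> gaps K"
  shows "Inf G < Sup G \<and> G = {Inf G<..<Sup G} \<and> Inf G \<in> K \<and> Sup G \<in> K"
proof -
  have c: "G \<in> components (- K)" "bounded G" using assms(2) by (auto simp: gaps_def)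
  have o: "open G" using open_components[OF _ c(1)] assms(1) by auto
  have I: "Inf G < Sup G \<and> G = {Inf G<..<Sup G}"
    using open_interval_real[OF o in_components_connected[OF c(1)] c(2) in_components_nonempty[OF c(1)]] .
  obtain a b where ab: "a < b" "G = {a<..<b}" "Inf G = a" "Sup G = b" using I by metis
  have sK: "{a<..<b} \<subseteq> - K" using in_components_subset[OF c(1)] ab by simp
  have cm: "connected T \<Longrightarrow> T \<subseteq> - K \<Longrightarrow> (a+b)/2 \<in> T \<Longrightarrow> T \<subseteq> {a<..<b}" for T
  proof -
    assume "connected T" "T \<subseteq> - K" "(a+b)/2 \<in> T"
    moreover have "(a+b)/2 \<in> G" using ab by auto
    ultimately show "T \<subseteq> {a<..<b}" using components_maximal[OF c(1), of T] ab(2) by blast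
  qed
  have a: "a \<in> K"
  proof (rule ccontr)
    assume "a \<notin> K"
    then obtain d where d: "d > 0" "ball a d \<subseteq> - K" using assms(1)
      by (metis ComplI open_Compl open_contains_ball)
    have "{a - d<..<b} \<subseteq> - K"
    proof
      fix x assume x: "x \<in> {a - d<..<b}"
      show "x \<in> - K"
      proof (cases "x \<le> a")
        case True then have "x \<in> ball a d" using x by (auto simp: dist_real_def)
        then show ?thesis using d by auto
      next
        case False then have "x \<in> {a<..<b}" using x by auto
        then show ?thesis using sK by blast
      qed
    qed
    then have "{a - d<..<b} \<subseteq> {a<..<b}" using cm[of "{a - d<..<b}"] ab d by auto
    moreover have "a \<in> {a - d<..<b}" using ab d by auto
    ultimately have "a \<in> {a<..<b}" by blast
    then show False by simp
  qed
  have b: "b \<in> K"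
  proof (rule ccontr)
    assume "b \<notin> K"
    then obtain d where d: "d > 0" "ball b d \<subseteq> - K" using assms(1)
      by (metis ComplI open_Compl open_contains_ball)
    have "{a<..<b + d} \<subseteq> - K"
    proof
      fix x assume x: "x \<in> {a<..<b + d}"
      show "x \<in> - K"
      proof (cases "x \<ge> b")
        case True then have "x \<in> ball b d" using x by (auto simp: dist_real_def)
        then show ?thesis using d by auto
      next
        case False then have "x \<in> {a<..<b}" using x by auto
        then show ?thesis using sK by blast
      qed
    qed
    then have "{a<..<b + d} \<subseteq> {a<..<b}" using cm[of "{a<..<b + d}"] ab d by auto
    moreover have "b \<in> {a<..<b + d}" using ab d by auto
    ultimately have "b \<in> {a<..<b}" by blast
    then show False by simp
  qed
  show ?thesis using ab a b by auto
qed

lemma gaps_disj: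
  assumes "closed K" "G1 \<in> gaps K" "G2 \<in> gaps K" "G1 \<noteq> G2"
  shows "Sup G1 \<le> Inf G2 \<or> Sup G2 \<le> Inf G1"
proof (rule ccontr)
  assume n: "\<not> ?thesis"
  have e: "G1 \<inter> G2 = {}" using assms components_nonoverlap by (auto simp: gaps_def)
  obtain a1 b1 where 1: "a1 < b1" "G1 = {a1<..<b1}" "Inf G1 = a1" "Sup G1 = b1"
    using gap_interval[OF assms(1,2)] by metis
  obtain a2 b2 where 2: "a2 < b2" "G2 = {a2<..<b2}" "Inf G2 = a2" "Sup G2 = b2"
    using gap_interval[OF assms(1,3)] by metis
  define x where "x = (max a1 a2 + min b1 b2) / 2"
  have "a1 < x" "x < b1" "a2 < x" "x < b2" using n 1 2 unfolding x_def max_def min_def by auto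
  then have "x \<in> G1 \<inter> G2" using 1 2 by auto
  then show False using e by auto
qed

lemma gaps_nonempty:
  assumes "cantor_set K" shows "gaps K \<noteq> {}"
proof -
  from assms have K: "K \<noteq> {}" "compact K" "\<forall>x\<in>K. x islimpt K" "\<forall>x\<in>K. connected_component_set K x = {x}"
    by (auto simp: cantor_set_def)
  obtain x where x: "x \<in> K" using K by auto
  have "x islimpt K" using K(3) x by blast
  then obtain y where y: "y \<in> K" "y \<noteq> x" unfolding islimpt_def using open_UNIV by blast
  define p where "p = min x y"
  define q where "q = max x y"
  have pq: "p \<in> K" "q \<in> K" "p < q" using x y by (auto simp: p_def q_def min_def max_def)
  have "\<not> {p..q} \<subseteq> K"
  proof
    assume "{p..q} \<subseteq> K"
    then have "connected_component K p q" unfolding connected_component_def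
      using pq by (intro exI[of _ "{p..q}"]) auto
    then show False using K(4) pq by auto
  qed
  then obtain z where z: "p \<le> z" "z \<le> q" "z \<notin> K" by (meson atLeastAtMost_iff subsetI)
  have zz: "p < z" "z < q" using z pq by (metis order_le_less)+
  define C where "C = connected_component_set (- K) z"
  have Cc: "C \<in> components (- K)" unfolding C_def by (rule componentsI) (simp add: z(3))
  have "C \<subseteq> {p..q}"
  proof
    fix w assume w: "w \<in> C"
    have zC: "z \<in> C" using z by (auto simp: C_def)
    have conn: "connected C" using in_components_connected[OF Cc] .
    have "p \<notin> C" "q \<notin> C" using pq in_components_subset[OF Cc] by auto
    show "w \<in> {p..q}"
    proof (rule ccontr)
      assume "w \<notin> {p..q}"
      then have "w < p \<or> q < w" by auto
      then show False
      proof
        assume "w < p" then have "p \<in> C" using conn[unfolded connected_iff_interval, rule_format, OF w zC] zz by simp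
        then show False using \<open>p \<notin> C\<close> by auto
      next
        assume "q < w" then have "q \<in> C" using conn[unfolded connected_iff_interval, rule_format, OF zC w] zz by simp
        then show False using \<open>q \<notin> C\<close> by auto
      qed
    qed
  qed
  then have "bounded C" by (rule bounded_subset[OF compact_imp_bounded[OF compact_Icc]])
  then have "C \<in> gaps K" using Cc by (auto simp: gaps_def)
  then show ?thesis by auto
qed



definition okR :: "real set \<Rightarrow> real \<Rightarrow> real \<Rightarrow> real set \<Rightarrow> bool" where
  "okR K u c H \<longleftrightarrow> H \<in> gaps K \<and> u \<le> Inf H \<and> glen H \<ge> c
     \<and> (\<forall>H'\<in>gaps K. H' \<subseteq> {u<..<Inf H} \<longrightarrow> glen H' < c)"

definition okL :: "real set \<Rightarrow> real \<Rightarrow> real \<Rightarrow> real set \<Rightarrow> bool" where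
  "okL K v c H \<longleftrightarrow> H \<in> gaps K \<and> Sup H \<le> v \<and> glen H \<ge> c
     \<and> (\<forall>H'\<in>gaps K. H' \<subseteq> {Sup H<..<v} \<longrightarrow> glen H' < c)"

lemma rbe_eq: "right_bridge_end \<epsilon> K G = (if \<exists>H. okR K (Sup G) ((1-\<epsilon>)*glen G) H
   then Inf (THE H. okR K (Sup G) ((1-\<epsilon>)*glen G) H) else Sup K)"
  unfolding right_bridge_end_def okR_def Let_def by simp

lemma lbe_eq: "left_bridge_end \<epsilon> K G = (if \<exists>H. okL K (Inf G) ((1-\<epsilon>)*glen G) H
   then Sup (THE H. okL K (Inf G) ((1-\<epsilon>)*glen G) H) else Inf K)"
  unfolding left_bridge_end_def okL_def Let_def by simp

lemma gapI:
  assumes "closed K" "H \<in> gaps K"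
  obtains a b where "a < b" "H = {a<..<b}" "Inf H = a" "Sup H = b" "a \<in> K" "b \<in> K" "glen H = b - a"
  using gap_interval[OF assms] unfolding glen_def by metis

lemma okR_unique:
  assumes "closed K" "okR K u c H1" "okR K u c H2" shows "H1 = H2"
proof (rule ccontr)
  assume ne: "H1 \<noteq> H2"
  have g: "H1 \<in> gaps K" "H2 \<in> gaps K" using assms by (auto simp: okR_def)
  obtain a1 b1 where 1: "a1 < b1" "H1 = {a1<..<b1}" "Inf H1 = a1" "Sup H1 = b1" "glen H1 = b1 - a1"
    using gapI[OF assms(1) g(1)] by metis
  obtain a2 b2 where 2: "a2 < b2" "H2 = {a2<..<b2}" "Inf H2 = a2" "Sup H2 = b2" "glen H2 = b2 - a2"
    using gapI[OF assms(1) g(2)] by metis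
  from gaps_disj[OF assms(1) g ne] 1 2 have "b1 \<le> a2 \<or> b2 \<le> a1" by simp
  then show False
  proof
    assume "b1 \<le> a2"
    then have "H1 \<subseteq> {u<..<Inf H2}" using assms(2) 1 2 by (auto simp: okR_def)
    then have "glen H1 < c" using assms(3) g by (auto simp: okR_def)
    then show False using assms(2) by (auto simp: okR_def)
  next
    assume "b2 \<le> a1"
    then have "H2 \<subseteq> {u<..<Inf H1}" using assms(3) 1 2 by (auto simp: okR_def)
    then have "glen H2 < c" using assms(2) g by (auto simp: okR_def)
    then show False using assms(3) by (auto simp: okR_def)
  qed
qed

lemma okL_unique:
  assumes "closed K" "okL K v c H1" "okL K v c H2" shows "H1 = H2"
proof (rule ccontr)
  assume ne: "H1 \<noteq> H2"
  have g: "H1 \<in> gaps K" "H2 \<in> gaps K" using assms by (auto simp: okL_def)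
  obtain a1 b1 where 1: "a1 < b1" "H1 = {a1<..<b1}" "Inf H1 = a1" "Sup H1 = b1" "glen H1 = b1 - a1"
    using gapI[OF assms(1) g(1)] by metis
  obtain a2 b2 where 2: "a2 < b2" "H2 = {a2<..<b2}" "Inf H2 = a2" "Sup H2 = b2" "glen H2 = b2 - a2"
    using gapI[OF assms(1) g(2)] by metis
  from gaps_disj[OF assms(1) g ne] 1 2 have "b1 \<le> a2 \<or> b2 \<le> a1" by simp
  then show False
  proof
    assume "b1 \<le> a2"
    then have "H2 \<subseteq> {Sup H1<..<v}" using assms(3) 1 2 by (auto simp: okL_def)
    then have "glen H2 < c" using assms(2) g by (auto simp: okL_def)
    then show False using assms(3) by (auto simp: okL_def)
  next
    assume "b2 \<le> a1"
    then have "H1 \<subseteq> {Sup H2<..<v}" using assms(2) 1 2 by (auto simp: okL_def)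
    then have "glen H1 < c" using assms(3) g by (auto simp: okL_def)
    then show False using assms(2) by (auto simp: okL_def)
  qed
qed

lemma okR_the: assumes "closed K" "okR K u c H" shows "(THE H. okR K u c H) = H"
proof (rule the_equality)
  show "okR K u c H" by (rule assms(2))
next
  fix H' assume "okR K u c H'"
  then show "H' = H" by (rule okR_unique[OF assms(1) _ assms(2)])
qed

lemma okL_the: assumes "closed K" "okL K v c H" shows "(THE H. okL K v c H) = H"
proof (rule the_equality)
  show "okL K v c H" by (rule assms(2))
next
  fix H' assume "okL K v c H'"
  then show "H' = H" by (rule okL_unique[OF assms(1) _ assms(2)])
qed

lemma cantor_facts:
  assumes "cantor_set K"
  shows "closed K" "bdd_below K" "bdd_above K" "\<And>x. x \<in> K \<Longrightarrow> Inf K \<le> x" "\<And>x. x \<in> K \<Longrightarrow> x \<le> Sup K"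
proof -
  have "compact K" using assms by (auto simp: cantor_set_def)
  then have bK: "bounded K" by (rule compact_imp_bounded)
  show c: "closed K" using \<open>compact K\<close> by (rule compact_imp_closed)
  show b: "bdd_below K" "bdd_above K" using bK bounded_imp_bdd_below bounded_imp_bdd_above by auto
  show "\<And>x. x \<in> K \<Longrightarrow> Inf K \<le> x" "\<And>x. x \<in> K \<Longrightarrow> x \<le> Sup K"
    using b cInf_lower cSup_upper by auto
qed

lemma finite_big_gaps:
  assumes K: "cantor_set K" and c: "c > 0"
  shows "finite {H \<in> gaps K. c \<le> glen H}"
proof -
  note cf = cantor_facts[OF K]
  define S where "S = {H \<in> gaps K. c \<le> glen H}"
  define f where "f H = floor (Inf H / c)" for H
  have inj: "inj_on f S"
  proof (rule inj_onI, rule ccontr)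
    fix H1 H2 assume h: "H1 \<in> S" "H2 \<in> S" "f H1 = f H2" "H1 \<noteq> H2"
    have g: "H1 \<in> gaps K" "H2 \<in> gaps K" using h by (auto simp: S_def)
    have gl: "c \<le> glen H1" "c \<le> glen H2" using h by (auto simp: S_def)
    obtain a1 b1 where 1: "a1 < b1" "Inf H1 = a1" "Sup H1 = b1" "glen H1 = b1 - a1"
      using gapI[OF cf(1) g(1)] by metis
    obtain a2 b2 where 2: "a2 < b2" "Inf H2 = a2" "Sup H2 = b2" "glen H2 = b2 - a2"
      using gapI[OF cf(1) g(2)] by metis
    have key: "floor (x / c) < floor (y / c)" if "x + c \<le> y" for x y
    proof -
      have "(x + c) / c \<le> y / c" using that c by (intro divide_right_mono) auto
      moreover have "(x + c) / c = x / c + 1" using c by (simp add: field_simps)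
      ultimately have "x / c + 1 \<le> y / c" by simp
      then have "floor (x / c + 1) \<le> floor (y / c)" by (rule floor_mono)
      then show ?thesis by simp
    qed
    from gaps_disj[OF cf(1) g h(4)] 1 2 have "b1 \<le> a2 \<or> b2 \<le> a1" by simp
    then show False
    proof
      assume "b1 \<le> a2" then have "a1 + c \<le> a2" using gl 1 by simp
      then have "floor (a1/c) < floor (a2/c)" by (rule key)
      then show False using h(3) 1 2 by (simp add: f_def)
    next
      assume "b2 \<le> a1" then have "a2 + c \<le> a1" using gl 2 by simp
      then have "floor (a2/c) < floor (a1/c)" by (rule key)
      then show False using h(3) 1 2 by (simp add: f_def)
    qed
  qed
  have "f ` S \<subseteq> {floor (Inf K / c)..floor (Sup K / c)}"
  proof
    fix y assume "y \<in> f ` S"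
    then obtain H where H: "H \<in> S" "y = f H" by auto
    then have "H \<in> gaps K" by (auto simp: S_def)
    then have "Inf H \<in> K" using gapI[OF cf(1)] by metis
    then have "Inf K \<le> Inf H" "Inf H \<le> Sup K" using cf by auto
    then have "Inf K / c \<le> Inf H / c" "Inf H / c \<le> Sup K / c" using c by (auto intro: divide_right_mono)
    then show "y \<in> {floor (Inf K / c)..floor (Sup K / c)}" using H by (auto simp: f_def intro: floor_mono)
  qed
  then have "finite (f ` S)" using finite_subset by blast
  then show ?thesis using finite_imageD inj unfolding S_def by blast
qed

lemma okR_exists:
  assumes K: "cantor_set K" and c: "c > 0" and H0: "H0 \<in> gaps K" "u \<le> Inf H0" "c \<le> glen H0"
  shows "\<exists>H. okR K u c H"
proof -
  note cf = cantor_facts[OF K]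
  define S where "S = {H \<in> gaps K. u \<le> Inf H \<and> c \<le> glen H}"
  have fS: "finite S" by (rule finite_subset[OF _ finite_big_gaps[OF K c]]) (auto simp: S_def)
  have neS: "Inf ` S \<noteq> {}" using H0 by (auto simp: S_def)
  define m where "m = Min (Inf ` S)"
  have "m \<in> Inf ` S" using Min_in[OF finite_imageI[OF fS] neS] by (simp add: m_def)
  then obtain H where H: "H \<in> S" "Inf H = m" by auto
  have mle: "m \<le> Inf H'" if "H' \<in> S" for H' using Min_le[OF finite_imageI[OF fS]] that by (auto simp: m_def)
  have "okR K u c H"
    unfolding okR_def
  proof (intro conjI ballI impI)
    show "H \<in> gaps K" "u \<le> Inf H" "c \<le> glen H" using H by (auto simp: S_def)
  next
    fix H' assume H': "H' \<in> gaps K" "H' \<subseteq> {u<..<Inf H}"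
    show "glen H' < c"
    proof (rule ccontr)
      assume "\<not> glen H' < c"
      then have gc: "c \<le> glen H'" by simp
      obtain a b where ab: "a < b" "H' = {a<..<b}" "Inf H' = a" "Sup H' = b"
        using gapI[OF cf(1) H'(1)] by metis
      have "u \<le> a"
      proof (rule ccontr)
        assume "\<not> u \<le> a"
        then have "(a + min u b)/2 \<in> H'" using ab by (auto simp: min_def)
        then have "(a + min u b)/2 \<in> {u<..<Inf H}" using H'(2) by blast
        moreover have "(a + min u b)/2 \<le> u" using \<open>\<not> u \<le> a\<close> \<open>a < b\<close> by (simp add: min_def)
        ultimately show False by simp
      qed
      have "b \<le> Inf H"
      proof (rule ccontr)
        assume "\<not> b \<le> Inf H"
        then have "(max a (Inf H) + b)/2 \<in> H'" using ab by (auto simp: max_def)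
        then have "(max a (Inf H) + b)/2 \<in> {u<..<Inf H}" using H'(2) by blast
        moreover have "Inf H \<le> (max a (Inf H) + b)/2" using \<open>\<not> b \<le> Inf H\<close> \<open>a < b\<close> by (simp add: max_def)
        ultimately show False by simp
      qed
      have "H' \<in> S" using H' gc \<open>u \<le> a\<close> ab by (auto simp: S_def)
      then have "m \<le> a" using mle ab by metis
      then show False using \<open>b \<le> Inf H\<close> H ab by simp
    qed
  qed
  then show ?thesis by blast
qed

lemma okL_exists:
  assumes K: "cantor_set K" and c: "c > 0" and H0: "H0 \<in> gaps K" "Sup H0 \<le> v" "c \<le> glen H0"
  shows "\<exists>H. okL K v c H"
proof -
  note cf = cantor_facts[OF K]
  define S where "S = {H \<in> gaps K. Sup H \<le> v \<and> c \<le> glen H}"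
  have fS: "finite S" by (rule finite_subset[OF _ finite_big_gaps[OF K c]]) (auto simp: S_def)
  have neS: "Sup ` S \<noteq> {}" using H0 by (auto simp: S_def)
  define m where "m = Max (Sup ` S)"
  have "m \<in> Sup ` S" using Max_in[OF finite_imageI[OF fS] neS] by (simp add: m_def)
  then obtain H where H: "H \<in> S" "Sup H = m" by auto
  have mle: "Sup H' \<le> m" if "H' \<in> S" for H' using Max_ge[OF finite_imageI[OF fS]] that by (auto simp: m_def)
  have "okL K v c H"
    unfolding okL_def
  proof (intro conjI ballI impI)
    show "H \<in> gaps K" "Sup H \<le> v" "c \<le> glen H" using H by (auto simp: S_def)
  next
    fix H' assume H': "H' \<in> gaps K" "H' \<subseteq> {Sup H<..<v}"
    show "glen H' < c"
    proof (rule ccontr)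
      assume "\<not> glen H' < c"
      then have gc: "c \<le> glen H'" by simp
      obtain a b where ab: "a < b" "H' = {a<..<b}" "Inf H' = a" "Sup H' = b"
        using gapI[OF cf(1) H'(1)] by metis
      have "b \<le> v"
      proof (rule ccontr)
        assume "\<not> b \<le> v"
        then have "(max a v + b)/2 \<in> H'" using ab by (auto simp: max_def)
        then have "(max a v + b)/2 \<in> {Sup H<..<v}" using H'(2) by blast
        moreover have "v \<le> (max a v + b)/2" using \<open>\<not> b \<le> v\<close> \<open>a < b\<close> by (simp add: max_def)
        ultimately show False by simp
      qed
      have "Sup H \<le> a"
      proof (rule ccontr)
        assume "\<not> Sup H \<le> a"
        then have "(a + min (Sup H) b)/2 \<in> H'" using ab by (auto simp: min_def)
        then have "(a + min (Sup H) b)/2 \<in> {Sup H<..<v}" using H'(2) by blast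
        moreover have "(a + min (Sup H) b)/2 \<le> Sup H" using \<open>\<not> Sup H \<le> a\<close> \<open>a < b\<close> by (simp add: min_def)
        ultimately show False by simp
      qed
      have "H' \<in> S" using H' gc \<open>b \<le> v\<close> ab by (auto simp: S_def)
      then have "b \<le> m" using mle ab by metis
      then show False using \<open>Sup H \<le> a\<close> H ab by simp
    qed
  qed
  then show ?thesis by blast
qed



lemma rbe_bounds:
  assumes K: "cantor_set K" and G: "G \<in> gaps K"
  shows "Sup G \<le> right_bridge_end \<epsilon> K G \<and> right_bridge_end \<epsilon> K G \<le> Sup K"
proof -
  note cf = cantor_facts[OF K]
  have sG: "Sup G \<in> K" using gapI[OF cf(1) G] by metis
  show ?thesis
  proof (cases "\<exists>H. okR K (Sup G) ((1-\<epsilon>)*glen G) H")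
    case True
    then obtain H where H: "okR K (Sup G) ((1-\<epsilon>)*glen G) H" by blast
    have e: "right_bridge_end \<epsilon> K G = Inf H" using rbe_eq[of \<epsilon> K G] True okR_the[OF cf(1) H] by simp
    have "H \<in> gaps K" "Sup G \<le> Inf H" using H by (auto simp: okR_def)
    moreover have "Inf H \<in> K" using gapI[OF cf(1) \<open>H \<in> gaps K\<close>] by metis
    ultimately show ?thesis using e cf(5) by auto
  next
    case False
    then have "right_bridge_end \<epsilon> K G = Sup K" using rbe_eq[of \<epsilon> K G] by simp
    then show ?thesis using cf(5)[OF sG] by simp
  qed
qed

lemma lbe_bounds:
  assumes K: "cantor_set K" and G: "G \<in> gaps K"
  shows "Inf K \<le> left_bridge_end \<epsilon> K G \<and> left_bridge_end \<epsilon> K G \<le> Inf G"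
proof -
  note cf = cantor_facts[OF K]
  have sG: "Inf G \<in> K" using gapI[OF cf(1) G] by metis
  show ?thesis
  proof (cases "\<exists>H. okL K (Inf G) ((1-\<epsilon>)*glen G) H")
    case True
    then obtain H where H: "okL K (Inf G) ((1-\<epsilon>)*glen G) H" by blast
    have e: "left_bridge_end \<epsilon> K G = Sup H" using lbe_eq[of \<epsilon> K G] True okL_the[OF cf(1) H] by simp
    have "H \<in> gaps K" "Sup H \<le> Inf G" using H by (auto simp: okL_def)
    moreover have "Sup H \<in> K" using gapI[OF cf(1) \<open>H \<in> gaps K\<close>] by metis
    ultimately show ?thesis using e cf(4) by auto
  next
    case False
    then have "left_bridge_end \<epsilon> K G = Inf K" using lbe_eq[of \<epsilon> K G] by simp
    then show ?thesis using cf(4)[OF sG] by simp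
  qed
qed

lemma rbe_mono:
  assumes K: "cantor_set K" and G: "G \<in> gaps K" and e: "0 \<le> \<epsilon>" "\<epsilon> < 1"
  shows "right_bridge_end \<epsilon> K G \<le> right_bridge_end 0 K G"
proof -
  note cf = cantor_facts[OF K]
  define u where "u = Sup G"
  define g where "g = glen G"
  define c where "c = (1-\<epsilon>)*g"
  have gpos: "g > 0" using gapI[OF cf(1) G] unfolding g_def by force
  have cpos: "c > 0" "c \<le> g" using gpos e unfolding c_def by (auto simp: mult_le_cancel_right1)
  have r0: "right_bridge_end 0 K G = (if \<exists>H. okR K u g H then Inf (THE H. okR K u g H) else Sup K)"
    using rbe_eq[of 0 K G] by (simp add: u_def g_def)
  have re: "right_bridge_end \<epsilon> K G = (if \<exists>H. okR K u c H then Inf (THE H. okR K u c H) else Sup K)"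
    using rbe_eq[of \<epsilon> K G] by (simp add: u_def g_def c_def)
  show ?thesis
  proof (cases "\<exists>H. okR K u g H")
    case True
    then obtain H where H: "okR K u g H" by blast
    have e0: "right_bridge_end 0 K G = Inf H" using r0 True okR_the[OF cf(1) H] by simp
    have Hg: "H \<in> gaps K" "u \<le> Inf H" "g \<le> glen H" using H by (auto simp: okR_def)
    obtain H' where H': "okR K u c H'" using okR_exists[OF K cpos(1) Hg(1,2)] Hg(3) cpos(2) by force
    have ee: "right_bridge_end \<epsilon> K G = Inf H'" using re H' okR_the[OF cf(1) H'] by auto
    have "Inf H' \<le> Inf H"
    proof (rule ccontr)
      assume lt: "\<not> Inf H' \<le> Inf H"
      have H'g: "H' \<in> gaps K" "\<forall>H''\<in>gaps K. H'' \<subseteq> {u<..<Inf H'} \<longrightarrow> glen H'' < c" using H' by (auto simp: okR_def)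
      have ne: "H \<noteq> H'" using lt by auto
      obtain a b where ab: "a < b" "H = {a<..<b}" "Inf H = a" "Sup H = b" using gapI[OF cf(1) Hg(1)] by metis
      obtain a' b' where ab': "a' < b'" "Inf H' = a'" "Sup H' = b'" using gapI[OF cf(1) H'g(1)] by metis
      have "b \<le> a'" using gaps_disj[OF cf(1) Hg(1) H'g(1) ne] ab ab' lt by auto
      then have "H \<subseteq> {u<..<Inf H'}" using ab ab' Hg(2) by auto
      then have "glen H < c" using H'g Hg(1) by blast
      then show False using Hg(3) cpos by simp
    qed
    then show ?thesis using e0 ee by simp
  next
    case False
    then show ?thesis using r0 rbe_bounds[OF K G, of \<epsilon>] by simp
  qed
qed

lemma lbe_mono:
  assumes K: "cantor_set K" and G: "G \<in> gaps K" and e: "0 \<le> \<epsilon>" "\<epsilon> < 1"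
  shows "left_bridge_end 0 K G \<le> left_bridge_end \<epsilon> K G"
proof -
  note cf = cantor_facts[OF K]
  define v where "v = Inf G"
  define g where "g = glen G"
  define c where "c = (1-\<epsilon>)*g"
  have gpos: "g > 0" using gapI[OF cf(1) G] unfolding g_def by force
  have cpos: "c > 0" "c \<le> g" using gpos e unfolding c_def by (auto simp: mult_le_cancel_right1)
  have r0: "left_bridge_end 0 K G = (if \<exists>H. okL K v g H then Sup (THE H. okL K v g H) else Inf K)"
    using lbe_eq[of 0 K G] by (simp add: v_def g_def)
  have re: "left_bridge_end \<epsilon> K G = (if \<exists>H. okL K v c H then Sup (THE H. okL K v c H) else Inf K)"
    using lbe_eq[of \<epsilon> K G] by (simp add: v_def g_def c_def)
  show ?thesis
  proof (cases "\<exists>H. okL K v g H")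
    case True
    then obtain H where H: "okL K v g H" by blast
    have e0: "left_bridge_end 0 K G = Sup H" using r0 True okL_the[OF cf(1) H] by simp
    have Hg: "H \<in> gaps K" "Sup H \<le> v" "g \<le> glen H" using H by (auto simp: okL_def)
    obtain H' where H': "okL K v c H'" using okL_exists[OF K cpos(1) Hg(1,2)] Hg(3) cpos(2) by force
    have ee: "left_bridge_end \<epsilon> K G = Sup H'" using re H' okL_the[OF cf(1) H'] by auto
    have "Sup H \<le> Sup H'"
    proof (rule ccontr)
      assume lt: "\<not> Sup H \<le> Sup H'"
      have H'g: "H' \<in> gaps K" "\<forall>H''\<in>gaps K. H'' \<subseteq> {Sup H'<..<v} \<longrightarrow> glen H'' < c" using H' by (auto simp: okL_def)
      have ne: "H \<noteq> H'" using lt by auto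
      obtain a b where ab: "a < b" "H = {a<..<b}" "Inf H = a" "Sup H = b" using gapI[OF cf(1) Hg(1)] by metis
      obtain a' b' where ab': "a' < b'" "Inf H' = a'" "Sup H' = b'" using gapI[OF cf(1) H'g(1)] by metis
      have "b' \<le> a" using gaps_disj[OF cf(1) Hg(1) H'g(1) ne] ab ab' lt by auto
      then have "H \<subseteq> {Sup H'<..<v}" using ab ab' Hg(2) by auto
      then have "glen H < c" using H'g Hg(1) by blast
      then show False using Hg(3) cpos by simp
    qed
    then show ?thesis using e0 ee by simp
  next
    case False
    then show ?thesis using r0 lbe_bounds[OF K G, of \<epsilon>] by simp
  qed
qed



lemma rbe_cases:
  assumes K: "cantor_set K" and G: "G \<in> gaps K" and e: "0 < \<epsilon>" "\<epsilon> < 1"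
  shows "right_bridge_end \<epsilon> K G = right_bridge_end 0 K G \<or>
    (\<exists>H'\<in>gaps K. (1-\<epsilon>)*glen G \<le> glen H' \<and> left_bridge_end 0 K H' = Sup G
        \<and> right_bridge_end \<epsilon> K G = Inf H')"
proof -
  note cf = cantor_facts[OF K]
  define u where "u = Sup G"
  define g where "g = glen G"
  define c where "c = (1-\<epsilon>)*g"
  have gpos: "g > 0" using gapI[OF cf(1) G] unfolding g_def by force
  have cpos: "c > 0" "c \<le> g" using gpos e unfolding c_def by (auto simp: mult_le_cancel_right1)
  have r0: "right_bridge_end 0 K G = (if \<exists>H. okR K u g H then Inf (THE H. okR K u g H) else Sup K)"
    using rbe_eq[of 0 K G] by (simp add: u_def g_def)
  have re: "right_bridge_end \<epsilon> K G = (if \<exists>H. okR K u c H then Inf (THE H. okR K u c H) else Sup K)"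
    using rbe_eq[of \<epsilon> K G] by (simp add: u_def g_def c_def)
  show ?thesis
  proof (cases "\<exists>H. okR K u c H")
    case True
    then obtain H' where H': "okR K u c H'" by blast
    have ee: "right_bridge_end \<epsilon> K G = Inf H'" using re H' okR_the[OF cf(1) H'] by auto
    have H'g: "H' \<in> gaps K" "u \<le> Inf H'" "c \<le> glen H'"
      "\<forall>H''\<in>gaps K. H'' \<subseteq> {u<..<Inf H'} \<longrightarrow> glen H'' < c" using H' by (auto simp: okR_def)
    show ?thesis
    proof (cases "g \<le> glen H'")
      case True
      have "okR K u g H'" unfolding okR_def using H'g True cpos by force
      then have "right_bridge_end 0 K G = Inf H'" using r0 okR_the[OF cf(1)] by auto
      then show ?thesis using ee by simp
    next
      case False
      have ok: "okL K (Inf H') (glen H') G" unfolding okL_def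
        using H'g False G by (force simp: u_def g_def)
      have "left_bridge_end 0 K H' = Sup G"
        using lbe_eq[of 0 K H'] ok okL_the[OF cf(1) ok] by auto
      then show ?thesis using ee H'g by (auto simp: c_def g_def)
    qed
  next
    case False
    have "\<not> (\<exists>H. okR K u g H)"
    proof
      assume "\<exists>H. okR K u g H"
      then obtain H where H: "okR K u g H" by blast
      have Hg: "H \<in> gaps K" "u \<le> Inf H" "g \<le> glen H" using H by (auto simp: okR_def)
      show False using okR_exists[OF K cpos(1) Hg(1,2)] Hg(3) cpos(2) False by force
    qed
    then show ?thesis using r0 re False by simp
  qed
qed

lemma lbe_cases:
  assumes K: "cantor_set K" and G: "G \<in> gaps K" and e: "0 < \<epsilon>" "\<epsilon> < 1"
  shows "left_bridge_end \<epsilon> K G = left_bridge_end 0 K G \<or>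
    (\<exists>H'\<in>gaps K. (1-\<epsilon>)*glen G \<le> glen H' \<and> right_bridge_end 0 K H' = Inf G
        \<and> left_bridge_end \<epsilon> K G = Sup H')"
proof -
  note cf = cantor_facts[OF K]
  define v where "v = Inf G"
  define g where "g = glen G"
  define c where "c = (1-\<epsilon>)*g"
  have gpos: "g > 0" using gapI[OF cf(1) G] unfolding g_def by force
  have cpos: "c > 0" "c \<le> g" using gpos e unfolding c_def by (auto simp: mult_le_cancel_right1)
  have r0: "left_bridge_end 0 K G = (if \<exists>H. okL K v g H then Sup (THE H. okL K v g H) else Inf K)"
    using lbe_eq[of 0 K G] by (simp add: v_def g_def)
  have re: "left_bridge_end \<epsilon> K G = (if \<exists>H. okL K v c H then Sup (THE H. okL K v c H) else Inf K)"
    using lbe_eq[of \<epsilon> K G] by (simp add: v_def g_def c_def)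
  show ?thesis
  proof (cases "\<exists>H. okL K v c H")
    case True
    then obtain H' where H': "okL K v c H'" by blast
    have ee: "left_bridge_end \<epsilon> K G = Sup H'" using re H' okL_the[OF cf(1) H'] by auto
    have H'g: "H' \<in> gaps K" "Sup H' \<le> v" "c \<le> glen H'"
      "\<forall>H''\<in>gaps K. H'' \<subseteq> {Sup H'<..<v} \<longrightarrow> glen H'' < c" using H' by (auto simp: okL_def)
    show ?thesis
    proof (cases "g \<le> glen H'")
      case True
      have "okL K v g H'" unfolding okL_def using H'g True cpos by force
      then have "left_bridge_end 0 K G = Sup H'" using r0 okL_the[OF cf(1)] by auto
      then show ?thesis using ee by simp
    next
      case False
      have ok: "okR K (Sup H') (glen H') G" unfolding okR_def
        using H'g False G by (force simp: v_def g_def)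
      have "right_bridge_end 0 K H' = Inf G"
        using rbe_eq[of 0 K H'] ok okR_the[OF cf(1) ok] by auto
      then show ?thesis using ee H'g by (auto simp: c_def g_def)
    qed
  next
    case False
    have "\<not> (\<exists>H. okL K v g H)"
    proof
      assume "\<exists>H. okL K v g H"
      then obtain H where H: "okL K v g H" by blast
      have Hg: "H \<in> gaps K" "Sup H \<le> v" "g \<le> glen H" using H by (auto simp: okL_def)
      show False using okL_exists[OF K cpos(1) Hg(1,2)] Hg(3) cpos(2) False by force
    qed
    then show ?thesis using r0 re False by simp
  qed
qed



lemma ratio_bound:
  fixes t g h D e :: real
  assumes "0 \<le> t" "g > 0" "0 < e" "e < 1" "(1-e)*g \<le> h" "t \<le> D/h"
  shows "(1-e)^2*t \<le> D/g"
proof -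
  have cg: "(1-e)*g > 0" using assms by simp
  then have hp: "h > 0" using assms by linarith
  have "t*h \<le> D" using assms(6) hp by (simp add: pos_le_divide_eq)
  moreover have "t*((1-e)*g) \<le> t*h" using assms(5,1) by (rule mult_left_mono)
  moreover have "(1-e)^2*t*g \<le> t*((1-e)*g)"
  proof -
    have "(1-e)^2*t*g = (1-e)*(t*((1-e)*g))" by (simp add: power2_eq_square algebra_simps)
    also have "\<dots> \<le> 1*(t*((1-e)*g))" using assms cg
      by (intro mult_right_mono) (auto intro: mult_nonneg_nonneg)
    finally show ?thesis by simp
  qed
  ultimately have "(1-e)^2*t*g \<le> D" by linarith
  then show ?thesis using assms(2) by (simp add: pos_le_divide_eq)
qed

lemma eq_bound:
  fixes t x e :: real
  assumes "0 \<le> t" "0 < e" "e < 1" "t \<le> x"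
  shows "(1-e)^2*t \<le> x"
proof -
  have "(1-e)^2 \<le> 1" using assms by (simp add: power_le_one)
  then have "(1-e)^2*t \<le> 1*t" using assms(1) by (rule mult_right_mono)
  then show ?thesis using assms(4) by simp
qed

theorem mainTheorem13:
  fixes C :: "real set"
  assumes "cantor_set C"
  shows "(\<forall>\<epsilon>::real. 0 < \<epsilon> \<and> \<epsilon> < 1 \<longrightarrow>
            (1 - \<epsilon>)^2 * thickness C \<le> eps_thickness \<epsilon> C
          \<and> eps_thickness \<epsilon> C \<le> thickness C)
       \<and> ((\<lambda>\<epsilon>. eps_thickness \<epsilon> C) \<longlongrightarrow> thickness C) (at_right 0)"
proof -
  note K = assms
  note cf = cantor_facts[OF K]
  define R where "R = (\<lambda>\<epsilon> G. (right_bridge_end \<epsilon> C G - Sup G) / glen G)"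
  define L where "L = (\<lambda>\<epsilon> G. (Inf G - left_bridge_end \<epsilon> C G) / glen G)"
  define S where "S = (\<lambda>\<epsilon>. R \<epsilon> ` gaps C \<union> L \<epsilon> ` gaps C)"
  have Eq: "eps_thickness \<epsilon> C = Inf (S \<epsilon>)" for \<epsilon>
    by (simp add: eps_thickness_def S_def R_def L_def)
  have gpos: "glen G > 0" if "G \<in> gaps C" for G using gapI[OF cf(1) that] by force
  have Rnn: "0 \<le> R \<epsilon> G" if "G \<in> gaps C" for \<epsilon> G
    using rbe_bounds[OF K that, of \<epsilon>] gpos[OF that] by (simp add: R_def)
  have Lnn: "0 \<le> L \<epsilon> G" if "G \<in> gaps C" for \<epsilon> G
    using lbe_bounds[OF K that, of \<epsilon>] gpos[OF that] by (simp add: L_def)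
  have nn: "0 \<le> x" if "x \<in> S \<epsilon>" for x \<epsilon> using that Rnn Lnn by (auto simp: S_def)
  have bdd: "bdd_below (S \<epsilon>)" for \<epsilon> using nn unfolding bdd_below_def by blast
  have ne: "S \<epsilon> \<noteq> {}" for \<epsilon> using gaps_nonempty[OF K] by (simp add: S_def)
  define t where "t = thickness C"
  have tI: "t = Inf (S 0)" by (simp add: t_def thickness_def Eq)
  have tnn: "0 \<le> t" unfolding tI by (rule cInf_greatest[OF ne]) (rule nn)
  have tR: "t \<le> R 0 G" if "G \<in> gaps C" for G
    unfolding tI using that by (intro cInf_lower[OF _ bdd]) (auto simp: S_def)
  have tL: "t \<le> L 0 G" if "G \<in> gaps C" for G
    unfolding tI using that by (intro cInf_lower[OF _ bdd]) (auto simp: S_def)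
  have lowS: "Inf (S \<epsilon>) \<le> x" if "x \<in> S \<epsilon>" for x \<epsilon> by (rule cInf_lower[OF that bdd])
  have main: "(1 - \<epsilon>)^2 * t \<le> Inf (S \<epsilon>) \<and> Inf (S \<epsilon>) \<le> t" if e: "0 < \<epsilon>" "\<epsilon> < 1" for \<epsilon>
  proof
    show "Inf (S \<epsilon>) \<le> t"
      unfolding tI
    proof (rule cInf_greatest[OF ne])
      fix x assume "x \<in> S 0"
      then obtain G where G: "G \<in> gaps C" "x = R 0 G \<or> x = L 0 G" by (auto simp: S_def)
      from G(2) show "Inf (S \<epsilon>) \<le> x"
      proof
        assume x: "x = R 0 G"
        have "R \<epsilon> G \<le> R 0 G" unfolding R_def using rbe_mono[OF K G(1), of \<epsilon>] e gpos[OF G(1)]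
          by (intro divide_right_mono) auto
        moreover have "Inf (S \<epsilon>) \<le> R \<epsilon> G" using G(1) by (intro lowS) (auto simp: S_def)
        ultimately show ?thesis using x by simp
      next
        assume x: "x = L 0 G"
        have "L \<epsilon> G \<le> L 0 G" unfolding L_def using lbe_mono[OF K G(1), of \<epsilon>] e gpos[OF G(1)]
          by (intro divide_right_mono) auto
        moreover have "Inf (S \<epsilon>) \<le> L \<epsilon> G" using G(1) by (intro lowS) (auto simp: S_def)
        ultimately show ?thesis using x by simp
      qed
    qed
  next
    show "(1 - \<epsilon>)^2 * t \<le> Inf (S \<epsilon>)"
    proof (rule cInf_greatest[OF ne])
      fix x assume "x \<in> S \<epsilon>"
      then obtain G where G: "G \<in> gaps C" "x = R \<epsilon> G \<or> x = L \<epsilon> G" by (auto simp: S_def)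
      from G(2) show "(1 - \<epsilon>)^2 * t \<le> x"
      proof
        assume x: "x = R \<epsilon> G"
        from rbe_cases[OF K G(1) e] show ?thesis
        proof
          assume "right_bridge_end \<epsilon> C G = right_bridge_end 0 C G"
          then have "R \<epsilon> G = R 0 G" by (simp add: R_def)
          then show ?thesis using x eq_bound[OF tnn e tR[OF G(1)]] by simp
        next
          assume "\<exists>H'\<in>gaps C. (1-\<epsilon>)*glen G \<le> glen H' \<and> left_bridge_end 0 C H' = Sup G
                     \<and> right_bridge_end \<epsilon> C G = Inf H'"
          then obtain H' where H': "H' \<in> gaps C" "(1-\<epsilon>)*glen G \<le> glen H'"
            "left_bridge_end 0 C H' = Sup G" "right_bridge_end \<epsilon> C G = Inf H'" by blast
          have "t \<le> (Inf H' - Sup G) / glen H'" using tL[OF H'(1)] H'(3) by (simp add: L_def)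
          then have "(1-\<epsilon>)^2*t \<le> (Inf H' - Sup G) / glen G"
            by (rule ratio_bound[OF tnn gpos[OF G(1)] e H'(2)])
          then show ?thesis using x H'(4) by (simp add: R_def)
        qed
      next
        assume x: "x = L \<epsilon> G"
        from lbe_cases[OF K G(1) e] show ?thesis
        proof
          assume "left_bridge_end \<epsilon> C G = left_bridge_end 0 C G"
          then have "L \<epsilon> G = L 0 G" by (simp add: L_def)
          then show ?thesis using x eq_bound[OF tnn e tL[OF G(1)]] by simp
        next
          assume "\<exists>H'\<in>gaps C. (1-\<epsilon>)*glen G \<le> glen H' \<and> right_bridge_end 0 C H' = Inf G
                     \<and> left_bridge_end \<epsilon> C G = Sup H'"
          then obtain H' where H': "H' \<in> gaps C" "(1-\<epsilon>)*glen G \<le> glen H'"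
            "right_bridge_end 0 C H' = Inf G" "left_bridge_end \<epsilon> C G = Sup H'" by blast
          have "t \<le> (Inf G - Sup H') / glen H'" using tR[OF H'(1)] H'(3) by (simp add: R_def)
          then have "(1-\<epsilon>)^2*t \<le> (Inf G - Sup H') / glen G"
            by (rule ratio_bound[OF tnn gpos[OF G(1)] e H'(2)])
          then show ?thesis using x H'(4) by (simp add: L_def)
        qed
      qed
    qed
  qed
  have part1: "\<forall>\<epsilon>::real. 0 < \<epsilon> \<and> \<epsilon> < 1 \<longrightarrow>
            (1 - \<epsilon>)^2 * thickness C \<le> eps_thickness \<epsilon> C \<and> eps_thickness \<epsilon> C \<le> thickness C"
    using main by (simp add: Eq t_def)
  have ev: "eventually (\<lambda>\<epsilon>. 0 < \<epsilon> \<and> \<epsilon> < 1) (at_right (0::real))"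
    by (rule eventually_at_rightI[of 0 1]) auto
  have ev1: "eventually (\<lambda>\<epsilon>. (1 - \<epsilon>)^2 * t \<le> eps_thickness \<epsilon> C) (at_right (0::real))"
    using ev by eventually_elim (use part1 t_def in auto)
  have ev2: "eventually (\<lambda>\<epsilon>. eps_thickness \<epsilon> C \<le> t) (at_right (0::real))"
    using ev by eventually_elim (use part1 t_def in auto)
  have lim1: "((\<lambda>\<epsilon>. (1 - \<epsilon>)^2 * t) \<longlongrightarrow> (1 - 0)^2 * t) (at_right (0::real))"
    by (intro tendsto_intros)
  have "((\<lambda>\<epsilon>. eps_thickness \<epsilon> C) \<longlongrightarrow> t) (at_right 0)"
    by (rule tendsto_sandwich[OF ev1 ev2]) (use lim1 in auto)
  then show ?thesis using part1 by (simp add: t_def)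
qed

end
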